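(* Let $\mu,\nu$ be finite Borel measures in metric spaces $X$ and $Y$ respectively, and let $\mu\times\nu$ be the product measure on $X\times Y$ (with the maximum metric). Then (i) $\dim_{\mathrm P}(\mu\times\nu)\ge\dim_{\mathrm P}\mu+\underline{\dim}_{\mathrm P}\nu$; (ii) $\underline{\dim}_{\mathrm P}(\mu\times\nu)\ge\underline{\dim}_{\mathrm P}\mu+\underline{\dim}_{\mathrm P}\nu$.
   Context: For a subset $E$ of a metric space, $N_\delta(E)$ is the minimal cardinality of a cover of $E$ by sets of diameter at most $\delta$; $\underline{\dim}_{\mathrm B}E=\liminf_{\delta\to0}\frac{\log N_\delta(E)}{|\log\delta|}$, $\overline{\dim}_{\mathrm B}E=\limsup_{\delta\to0}\frac{\log N_\delta(E)}{|\log\delta|}$; $\dim_{\mathrm P}E=\inf\{\sup_n\overline{\dim}_{\mathrm B}E_n:E\subseteq\bigcup_nE_n\}$ and $\underline{\dim}_{\mathrm P}E=\inf\{\sup_n\underline{\dim}_{\mathrm B}E_n:E\subseteq\bigcup_nE_n\}$ (countable covers). For a finite Borel measure $\mu$ on a metric space $X$ and $\dim$ either of these dimensions, $\dim\mu=\inf\{\dim E: E\subseteq X\text{ Borel},\ \mu(E)>0\}$. *)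

theory Defs
  imports "HOL-Analysis.Analysis"
begin

text \<open>All notions are parametrised by a distance function d, so that the product
  X \<times> Y can be equipped with the maximum metric.\<close>

definition diam_le :: "('a \<Rightarrow> 'a \<Rightarrow> real) \<Rightarrow> real \<Rightarrow> 'a set \<Rightarrow> bool" where
  "diam_le d \<delta> S \<longleftrightarrow> (\<forall>x\<in>S. \<forall>y\<in>S. d x y \<le> \<delta>)"

text \<open>N_delta(E): minimal cardinality of a cover of E by sets of diameter at most delta
  (infinity if there is no finite such cover).\<close>
definition cover_num :: "('a \<Rightarrow> 'a \<Rightarrow> real) \<Rightarrow> real \<Rightarrow> 'a set \<Rightarrow> ereal" where
  "cover_num d \<delta> E = Inf {ereal (real (card C)) | C. finite C \<and> E \<subseteq> \<Union>C \<and> (\<forall>S\<in>C. diam_le d \<delta> S)}"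

definition box_ratio :: "('a \<Rightarrow> 'a \<Rightarrow> real) \<Rightarrow> 'a set \<Rightarrow> real \<Rightarrow> ereal" where
  "box_ratio d E \<delta> =
     (if cover_num d \<delta> E = \<infinity> then \<infinity>
      else ereal (ln (real_of_ereal (cover_num d \<delta> E)) / \<bar>ln \<delta>\<bar>))"

definition lower_box_dim :: "('a \<Rightarrow> 'a \<Rightarrow> real) \<Rightarrow> 'a set \<Rightarrow> ereal" where
  "lower_box_dim d E = Liminf (at_right 0) (box_ratio d E)"

definition upper_box_dim :: "('a \<Rightarrow> 'a \<Rightarrow> real) \<Rightarrow> 'a set \<Rightarrow> ereal" where
  "upper_box_dim d E = Limsup (at_right 0) (box_ratio d E)"

definition packing_dim :: "('a \<Rightarrow> 'a \<Rightarrow> real) \<Rightarrow> 'a set \<Rightarrow> ereal" where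
  "packing_dim d E = Inf {(SUP n. upper_box_dim d (Es n)) | Es :: nat \<Rightarrow> 'a set. E \<subseteq> (\<Union>n. Es n)}"

definition lower_packing_dim :: "('a \<Rightarrow> 'a \<Rightarrow> real) \<Rightarrow> 'a set \<Rightarrow> ereal" where
  "lower_packing_dim d E = Inf {(SUP n. lower_box_dim d (Es n)) | Es :: nat \<Rightarrow> 'a set. E \<subseteq> (\<Union>n. Es n)}"

text \<open>The measure of a Borel set is taken as the outer measure, which agrees with the measure
  on measurable sets (relevant for the product measure, whose sigma-algebra is the
  product sigma-algebra, possibly smaller than the Borel sets of the product).\<close>
definition measure_dim ::
  "('a set \<Rightarrow> ereal) \<Rightarrow> ('a::topological_space) measure \<Rightarrow> ereal" where
  "measure_dim dimf M = Inf {dimf E | E. E \<in> sets borel \<and> outer_measure_of M E > 0}"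

definition max_dist :: "('a::metric_space \<times> 'b::metric_space) \<Rightarrow> ('a \<times> 'b) \<Rightarrow> real" where
  "max_dist p q = max (dist (fst p) (fst q)) (dist (snd p) (snd q))"

end

theory Submission
  imports Defs
begin

lemma diam_le_mono: "\<delta>1 \<le> \<delta>2 \<Longrightarrow> diam_le d \<delta>1 S \<Longrightarrow> diam_le d \<delta>2 S"
  unfolding diam_le_def by (meson order_trans)

lemma cover_num_le:
  assumes "finite C" "E \<subseteq> \<Union>C" "\<forall>S\<in>C. diam_le d \<delta> S"
  shows "cover_num d \<delta> E \<le> ereal (real (card C))"
  unfolding cover_num_def by (rule Inf_lower) (use assms in blast)

lemma cover_num_anti:
  assumes "\<delta>1 \<le> \<delta>2" shows "cover_num d \<delta>2 E \<le> cover_num d \<delta>1 E"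
  unfolding cover_num_def
  by (rule Inf_superset_mono) (blast intro: diam_le_mono[OF assms])

lemma cover_num_mono_set:
  assumes "E \<subseteq> F" shows "cover_num d \<delta> E \<le> cover_num d \<delta> F"
  unfolding cover_num_def
  by (rule Inf_superset_mono) (use assms in blast)

lemma cover_num_sep:
  assumes "finite P" "P \<subseteq> E" "\<forall>p\<in>P. \<forall>q\<in>P. p \<noteq> q \<longrightarrow> d p q > \<delta>"
  shows "ereal (real (card P)) \<le> cover_num d \<delta> E"
  unfolding cover_num_def
proof (rule Inf_greatest, clarify)
  fix C assume C: "finite C" "E \<subseteq> \<Union>C" "\<forall>S\<in>C. diam_le d \<delta> S"
  have "\<forall>p\<in>P. \<exists>S. S \<in> C \<and> p \<in> S" using C(2) assms(2) by blast
  from bchoice[OF this] obtain f where f: "\<forall>p\<in>P. f p \<in> C \<and> p \<in> f p" by blast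
  have "inj_on f P"
  proof (rule inj_onI, rule ccontr)
    fix p q assume pq: "p \<in> P" "q \<in> P" "f p = f q" "p \<noteq> q"
    have fC: "f p \<in> C" "p \<in> f p" "q \<in> f p" using f pq by auto
    have "diam_le d \<delta> (f p)" using C(3) fC(1) by blast
    then have "d p q \<le> \<delta>" using fC unfolding diam_le_def by blast
    moreover have "d p q > \<delta>" using assms(3) pq by blast
    ultimately show False by simp
  qed
  then have "card P \<le> card C" using card_inj_on_le[of f P C] f C(1) by blast
  then show "ereal (real (card P)) \<le> ereal (real (card C))" by simp
qed

lemma cover_num_ge_nat:
  assumes "ereal c < cover_num d \<delta> E" "c \<ge> 0"
  shows "ereal (real (nat \<lfloor>c\<rfloor> + 1)) \<le> cover_num d \<delta> E"
  unfolding cover_num_def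
proof (rule Inf_greatest, clarify)
  fix C assume C: "finite C" "E \<subseteq> \<Union>C" "\<forall>S\<in>C. diam_le d \<delta> S"
  then have "cover_num d \<delta> E \<le> ereal (real (card C))"
    unfolding cover_num_def by (intro Inf_lower) blast
  with assms(1) have "ereal c < ereal (real (card C))" by (rule less_le_trans)
  then have "c < real (card C)" by simp
  then have "nat \<lfloor>c\<rfloor> < card C" using assms(2) by linarith
  then show "ereal (real (nat \<lfloor>c\<rfloor> + 1)) \<le> ereal (real (card C))" by simp
qed

lemma cover_num_nonempty:
  assumes "E \<noteq> {}" shows "1 \<le> cover_num d \<delta> E"
  unfolding cover_num_def
proof (rule Inf_greatest, clarify)
  fix C assume C: "finite C" "E \<subseteq> \<Union>C" "\<forall>S\<in>C. diam_le d \<delta> S"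
  then have "C \<noteq> {}" using assms by auto
  then have "card C \<ge> 1" using C(1) by (simp add: Suc_leI card_gt_0_iff)
  then show "1 \<le> ereal (real (card C))" by simp
qed

lemma cover_num_nonneg: "0 \<le> cover_num d \<delta> E"
  unfolding cover_num_def by (rule Inf_greatest) auto

lemma cover_num_real:
  assumes "cover_num d \<delta> E \<noteq> \<infinity>"
  shows "cover_num d \<delta> E = ereal (real_of_ereal (cover_num d \<delta> E))"
  using assms cover_num_nonneg[of d \<delta> E] by (cases "cover_num d \<delta> E") auto

lemma diam_le_closure:
  fixes d :: "'x::topological_space \<Rightarrow> 'x \<Rightarrow> real"
  assumes cont: "continuous_on UNIV (\<lambda>p. d (fst p) (snd p))"
    and "diam_le d \<delta> S"
  shows "diam_le d \<delta> (closure S)"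
proof -
  have cl: "closed {p. d (fst p) (snd p) \<le> \<delta>}"
    using closed_Collect_le[OF cont continuous_on_const] by simp
  have "S \<times> S \<subseteq> {p. d (fst p) (snd p) \<le> \<delta>}" using assms(2) unfolding diam_le_def by auto
  then have "closure (S \<times> S) \<subseteq> {p. d (fst p) (snd p) \<le> \<delta>}" using cl by (rule closure_minimal)
  then show ?thesis unfolding diam_le_def closure_Times by auto
qed

lemma cover_num_closure:
  fixes d :: "'x::topological_space \<Rightarrow> 'x \<Rightarrow> real"
  assumes cont: "continuous_on UNIV (\<lambda>p. d (fst p) (snd p))"
  shows "cover_num d \<delta> (closure E) \<le> cover_num d \<delta> E"
  unfolding cover_num_def
proof (rule Inf_greatest, clarify)
  fix C assume C: "finite C" "E \<subseteq> \<Union>C" "\<forall>S\<in>C. diam_le d \<delta> S"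
  have "closure E \<subseteq> closure (\<Union>C)" using C(2) by (rule closure_mono)
  also have "\<dots> \<subseteq> \<Union>(closure ` C)" using C(1)
    by (intro closure_minimal) (auto intro: closure_subset[THEN subsetD])
  finally have cov: "closure E \<subseteq> \<Union>(closure ` C)" .
  have "Inf {ereal (real (card C')) |C'. finite C' \<and> closure E \<subseteq> \<Union> C' \<and> (\<forall>S\<in>C'. diam_le d \<delta> S)}
      \<le> ereal (real (card (closure ` C)))"
    by (intro Inf_lower) (use C cov diam_le_closure[OF cont] in blast)
  also have "\<dots> \<le> ereal (real (card C))" using card_image_le[OF C(1)] by simp
  finally show "Inf {ereal (real (card C')) |C'. finite C' \<and> closure E \<subseteq> \<Union> C' \<and> (\<forall>S\<in>C'. diam_le d \<delta> S)}
      \<le> ereal (real (card C))" .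
qed

lemma cont_dist: "continuous_on UNIV (\<lambda>p. dist (fst p) (snd p :: 'x::metric_space))"
  by (intro continuous_intros)

lemma cont_max_dist: "continuous_on UNIV (\<lambda>p. max_dist (fst p) (snd p :: 'x::metric_space \<times> 'y::metric_space))"
  unfolding max_dist_def by (intro continuous_intros)

lemma exists_sep:
  assumes tri: "\<forall>x y z. d x z \<le> d x y + d y z" and sym: "\<forall>x y. d x y = d y x"
    and refl: "\<forall>x. d x x = 0" and r: "r > 0"
    and m: "ereal (real m) \<le> cover_num d (2*r) E"
  shows "\<exists>P. finite P \<and> P \<subseteq> E \<and> card P = m \<and> (\<forall>p\<in>P. \<forall>q\<in>P. p \<noteq> q \<longrightarrow> d p q > r)"
proof -
  define sep where "sep P \<longleftrightarrow> finite P \<and> P \<subseteq> E \<and> (\<forall>p\<in>P. \<forall>q\<in>P. p\<noteq>q \<longrightarrow> d p q > r)" for P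
  show ?thesis
  proof (cases "\<exists>P. sep P \<and> card P \<ge> m")
    case True
    then obtain P where P: "sep P" "card P \<ge> m" by blast
    obtain Q where Q: "Q \<subseteq> P" "card Q = m" "finite Q"
      using obtain_subset_with_card_n[OF P(2)] by blast
    have P1: "P \<subseteq> E" "\<forall>p\<in>P. \<forall>q\<in>P. p\<noteq>q \<longrightarrow> d p q > r" using P(1) unfolding sep_def by simp_all
    have QE: "Q \<subseteq> E" using Q(1) P1(1) by (rule order_trans)
    have Qs: "\<forall>p\<in>Q. \<forall>q\<in>Q. p \<noteq> q \<longrightarrow> d p q > r"
    proof (intro ballI impI)
      fix p q assume "p \<in> Q" "q \<in> Q" "p \<noteq> q"
      then have "p \<in> P" "q \<in> P" using Q(1) by (auto simp only: subset_iff)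
      then show "d p q > r" using P1(2) \<open>p \<noteq> q\<close> by simp
    qed
    have "finite Q \<and> Q \<subseteq> E \<and> card Q = m \<and> (\<forall>p\<in>Q. \<forall>q\<in>Q. p \<noteq> q \<longrightarrow> d p q > r)"
      by (intro conjI Q(3) QE Q(2) Qs)
    then show ?thesis by (rule exI)
  next
    case False
    have lt: "card P < m" if "sep P" for P using False that by (simp add: not_le)
    define K where "K = card ` {P. sep P}"
    have "K \<subseteq> {..<m}" unfolding K_def using lt by auto
    then have Kfin: "finite K" by (rule finite_subset) simp
    have "sep {}" unfolding sep_def by simp
    then have "K \<noteq> {}" unfolding K_def by blast
    then have "Max K \<in> K" using Kfin by (rule Max_in[rotated])
    then obtain P where P: "sep P" "card P = Max K" unfolding K_def by auto
    have Pfin: "finite P" and PE: "P \<subseteq> E" and Ps: "\<forall>p\<in>P. \<forall>q\<in>P. p\<noteq>q \<longrightarrow> d p q > r"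
      using P(1) unfolding sep_def by simp_all
    have cov: "E \<subseteq> (\<Union>p\<in>P. {y. d p y \<le> r})"
    proof
      fix x assume x: "x \<in> E"
      show "x \<in> (\<Union>p\<in>P. {y. d p y \<le> r})"
      proof (rule ccontr)
        assume nx: "x \<notin> (\<Union>p\<in>P. {y. d p y \<le> r})"
        then have far: "\<forall>p\<in>P. d p x > r" by (simp add: not_le)
        have "x \<notin> P"
        proof
          assume "x \<in> P"
          then have "d x x > r" using far by blast
          then show False using refl r by simp
        qed
        have s2: "\<forall>p\<in>insert x P. \<forall>q\<in>insert x P. p\<noteq>q \<longrightarrow> d p q > r"
        proof (intro ballI impI)
          fix p q assume pq: "p \<in> insert x P" "q \<in> insert x P" "p \<noteq> q"
          show "d p q > r"
          proof (cases "p = x")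
            case True
            then have "q \<in> P" using pq by simp
            then have "d q x > r" using far by blast
            then show ?thesis using True sym by metis
          next
            case False
            then have pP: "p \<in> P" using pq by simp
            show ?thesis
            proof (cases "q = x")
              case True then show ?thesis using far pP by simp
            next
              case False
              then have "q \<in> P" using pq by simp
              then show ?thesis using Ps pP pq(3) by simp
            qed
          qed
        qed
        have "sep (insert x P)" unfolding sep_def using Pfin PE x s2 by simp
        then have "card (insert x P) \<in> K" unfolding K_def by blast
        then have "card (insert x P) \<le> Max K" using Kfin by simp
        moreover have "card (insert x P) = card P + 1" using \<open>x \<notin> P\<close> Pfin by simp
        ultimately show False using P(2) by simp
      qed
    qed
    define C where "C = (\<lambda>p. {y. d p y \<le> r}) ` P"
    have Cfin: "finite C" using Pfin unfolding C_def by simp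
    have Cdiam: "\<forall>S\<in>C. diam_le d (2*r) S"
    proof
      fix S assume "S \<in> C"
      then obtain p where S: "S = {y. d p y \<le> r}" unfolding C_def by blast
      show "diam_le d (2*r) S" unfolding diam_le_def S
      proof (intro ballI)
        fix y z assume "y \<in> {y. d p y \<le> r}" "z \<in> {y. d p y \<le> r}"
        then have yz: "d p y \<le> r" "d p z \<le> r" by simp_all
        have "d y z \<le> d y p + d p z" using tri by blast
        also have "d y p = d p y" using sym by blast
        finally show "d y z \<le> 2 * r" using yz by simp
      qed
    qed
    have covC: "E \<subseteq> \<Union>C" using cov unfolding C_def by simp
    have "cover_num d (2*r) E \<le> ereal (real (card C))"
      unfolding cover_num_def by (rule Inf_lower) (use Cfin covC Cdiam in blast)
    moreover have "card C \<le> card P" unfolding C_def using Pfin by (rule card_image_le)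
    moreover have "card P < m" using lt P(1) by blast
    ultimately have "cover_num d (2*r) E < ereal (real m)" by (simp add: le_less_trans)
    with m show ?thesis by simp
  qed
qed

lemma box_ratio_gt:
  assumes "0 < \<delta>" "\<delta> < 1" "E \<noteq> {}" "box_ratio d E \<delta> > ereal s"
  shows "cover_num d \<delta> E > ereal (\<delta> powr (-s))"
proof (cases "cover_num d \<delta> E = \<infinity>")
  case True then show ?thesis by simp
next
  case False
  define n where "n = real_of_ereal (cover_num d \<delta> E)"
  have N: "cover_num d \<delta> E = ereal n" using cover_num_real[OF False] n_def by simp
  have n1: "n \<ge> 1" using cover_num_nonempty[OF assms(3), of d \<delta>] N by simp
  have L: "\<bar>ln \<delta>\<bar> = - ln \<delta>" "- ln \<delta> > 0" using assms(1,2) by auto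
  have "s < ln n / (- ln \<delta>)" using assms(4) False N L unfolding box_ratio_def by simp
  then have "s * (- ln \<delta>) < ln n" using L(2) by (simp add: field_simps)
  then have "exp (-s * ln \<delta>) < exp (ln n)" by simp
  then have "\<delta> powr (-s) < n" using n1 assms(1) by (simp add: powr_def)
  then show ?thesis using N by simp
qed

lemma box_ratio_ge:
  assumes "0 < \<delta>" "\<delta> < 1/2" "0 < r" "r < w" "\<delta> < exp (-(w*ln 2)/(w-r))"
    and "ereal ((2*\<delta>) powr (-w)) \<le> cover_num d \<delta> H"
  shows "box_ratio d H \<delta> \<ge> ereal r"
proof (cases "cover_num d \<delta> H = \<infinity>")
  case True then show ?thesis unfolding box_ratio_def by simp
next
  case False
  define n where "n = real_of_ereal (cover_num d \<delta> H)"
  have N: "cover_num d \<delta> H = ereal n" using cover_num_real[OF False] n_def by simp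
  define L where "L = - ln \<delta>"
  have L: "\<bar>ln \<delta>\<bar> = L" "L > 0" using assms(1,2) unfolding L_def by auto
  have pos: "(2*\<delta>) powr (-w) > 0" using assms(1) by simp
  have le: "(2*\<delta>) powr (-w) \<le> n" using assms(6) N by simp
  have npos: "n > 0" using pos le by linarith
  have "ln ((2*\<delta>) powr (-w)) \<le> ln n" using le by (subst ln_le_cancel_iff[OF pos npos])
  moreover have "ln ((2*\<delta>) powr (-w)) = -w * (ln 2 - L)"
    using assms(1) unfolding L_def by (simp add: ln_powr ln_mult)
  ultimately have lnn: "w * (L - ln 2) \<le> ln n" by (simp add: algebra_simps)
  have "ln \<delta> < -(w*ln 2)/(w-r)" using assms(1,5) by (metis ln_exp ln_less_cancel_iff exp_gt_zero)
  then have "L > (w*ln 2)/(w-r)" unfolding L_def by simp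
  then have "L * (w - r) > w * ln 2" using assms(4) by (simp add: field_simps)
  then have "r * L \<le> w * (L - ln 2)" by (simp add: algebra_simps)
  then have "r * L \<le> ln n" using lnn by simp
  then have "r \<le> ln n / L" using L(2) by (simp add: field_simps)
  then show ?thesis using False N L unfolding box_ratio_def by simp
qed



lemma cover_num_01: "cover_num d \<delta> E = 0 \<or> cover_num d \<delta> E \<ge> 1"
proof (cases "\<exists>C. finite C \<and> E \<subseteq> \<Union>C \<and> (\<forall>S\<in>C. diam_le d \<delta> S) \<and> card C = 0")
  case True
  then obtain C where C0: "finite C \<and> E \<subseteq> \<Union>C \<and> (\<forall>S\<in>C. diam_le d \<delta> S) \<and> card C = 0" by (rule exE)
  note C = conjunct1[OF C0] conjunct1[OF conjunct2[OF C0]] conjunct1[OF conjunct2[OF conjunct2[OF C0]]]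
    conjunct2[OF conjunct2[OF conjunct2[OF C0]]]
  have le: "cover_num d \<delta> E \<le> ereal (real (card C))"
    by (rule cover_num_le[OF C(1-3)])
  have z: "ereal (real (card C)) = 0" using C(4) by simp
  have "cover_num d \<delta> E \<le> 0" using le unfolding z .
  then have "cover_num d \<delta> E = 0" using cover_num_nonneg[of d \<delta> E] by (rule antisym)
  then show ?thesis by (rule disjI1)
next
  case False
  have "1 \<le> cover_num d \<delta> E" unfolding cover_num_def
  proof (rule Inf_greatest, clarify)
    fix C assume C: "finite C" "E \<subseteq> \<Union>C" "\<forall>S\<in>C. diam_le d \<delta> S"
    have "card C \<noteq> 0"
    proof
      assume "card C = 0"
      then have "\<exists>C. finite C \<and> E \<subseteq> \<Union>C \<and> (\<forall>S\<in>C. diam_le d \<delta> S) \<and> card C = 0"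
        using C by (intro exI[of _ C] conjI)
      then show False using False by (rule notE[rotated])
    qed
    then show "1 \<le> ereal (real (card C))" by simp
  qed
  then show ?thesis by simp
qed

lemma box_ratio_nonneg: "0 \<le> box_ratio d E \<delta>"
proof (cases "cover_num d \<delta> E = \<infinity>")
  case True then show ?thesis unfolding box_ratio_def by simp
next
  case False
  define n where "n = real_of_ereal (cover_num d \<delta> E)"
  have N: "cover_num d \<delta> E = ereal n" using cover_num_real[OF False] n_def by simp
  have "ereal n = 0 \<or> ereal n \<ge> 1" using cover_num_01[of d \<delta> E] unfolding N .
  then have "n = 0 \<or> n \<ge> 1" by auto
  then have "ln n \<ge> 0" by auto
  then have "ln (real_of_ereal (cover_num d \<delta> E)) \<ge> 0" unfolding n_def .
  then show ?thesis using False unfolding box_ratio_def by simp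
qed

lemma box_ratio_mono:
  assumes "cover_num d \<delta> E \<le> cover_num d' \<delta> F"
  shows "box_ratio d E \<delta> \<le> box_ratio d' F \<delta>"
proof (cases "cover_num d' \<delta> F = \<infinity>")
  case True then show ?thesis unfolding box_ratio_def by simp
next
  case False
  then have False': "cover_num d \<delta> E \<noteq> \<infinity>" using assms by auto
  define n1 where "n1 = real_of_ereal (cover_num d \<delta> E)"
  define n2 where "n2 = real_of_ereal (cover_num d' \<delta> F)"
  have N1: "cover_num d \<delta> E = ereal n1" using cover_num_real[OF False'] n1_def by simp
  have N2: "cover_num d' \<delta> F = ereal n2" using cover_num_real[OF False] n2_def by simp
  have le: "n1 \<le> n2" using assms N1 N2 by simp
  have "n1 = 0 \<or> n1 \<ge> 1" using cover_num_01[of d \<delta> E] N1 by auto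
  moreover have "n2 = 0 \<or> n2 \<ge> 1" using cover_num_01[of d' \<delta> F] N2 by auto
  ultimately have "ln n1 \<le> ln n2" using le by auto
  then have "ln n1 / \<bar>ln \<delta>\<bar> \<le> ln n2 / \<bar>ln \<delta>\<bar>" by (simp add: divide_right_mono)
  then show ?thesis using False False' N1 N2 unfolding box_ratio_def by simp
qed

lemma ev_pos: "eventually (\<lambda>\<delta>::real. 0 < \<delta>) (at_right 0)"
  unfolding eventually_at_right_field by (intro exI[of _ 1]) auto

lemma ubox_mono:
  assumes "\<And>\<delta>. 0 < \<delta> \<Longrightarrow> cover_num d \<delta> E \<le> cover_num d' \<delta> F"
  shows "upper_box_dim d E \<le> upper_box_dim d' F"
  unfolding upper_box_dim_def
  by (intro Limsup_mono eventually_mono[OF ev_pos] box_ratio_mono assms)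

lemma lbox_mono:
  assumes "\<And>\<delta>. 0 < \<delta> \<Longrightarrow> cover_num d \<delta> E \<le> cover_num d' \<delta> F"
  shows "lower_box_dim d E \<le> lower_box_dim d' F"
  unfolding lower_box_dim_def
  by (intro Liminf_mono eventually_mono[OF ev_pos] box_ratio_mono assms)

lemma lbox_nonneg: "0 \<le> lower_box_dim d E"
  unfolding lower_box_dim_def by (intro Liminf_bounded always_eventually allI box_ratio_nonneg)

lemma lbox_le_ubox: "lower_box_dim d E \<le> upper_box_dim d E"
  unfolding lower_box_dim_def upper_box_dim_def by (intro Liminf_le_Limsup) simp

lemma ubox_nonneg: "0 \<le> upper_box_dim d E"
  using lbox_nonneg lbox_le_ubox order.trans by blast

lemma pd_nonneg: "0 \<le> packing_dim d E"
  unfolding packing_dim_def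
  by (intro Inf_greatest) (auto intro: SUP_upper2 ubox_nonneg)

lemma lpd_nonneg: "0 \<le> lower_packing_dim d E"
  unfolding lower_packing_dim_def
  by (intro Inf_greatest) (auto intro: SUP_upper2 lbox_nonneg)

lemma measure_dim_nonneg:
  assumes "\<And>E. 0 \<le> dimf E" shows "0 \<le> measure_dim dimf M"
  unfolding measure_dim_def by (intro Inf_greatest) (auto intro: assms)

lemma pd_le_ubox: "packing_dim d E \<le> upper_box_dim d E"
  unfolding packing_dim_def by (intro Inf_lower CollectI exI[of _ "\<lambda>n::nat. E"]) simp

lemma lpd_le_lbox: "lower_packing_dim d E \<le> lower_box_dim d E"
  unfolding lower_packing_dim_def by (intro Inf_lower CollectI exI[of _ "\<lambda>n::nat. E"]) simp

lemma lbox_finite_cover: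
  assumes "lower_box_dim d E < \<infinity>" "0 < \<delta>"
  shows "cover_num d \<delta> E \<noteq> \<infinity>"
proof
  assume inf: "cover_num d \<delta> E = \<infinity>"
  have "eventually (\<lambda>y. \<infinity> \<le> box_ratio d E y) (at_right 0)"
    unfolding eventually_at_right_field
  proof (intro exI[of _ \<delta>] conjI allI impI)
    fix y :: real assume "0 < y" "y < \<delta>"
    then have "cover_num d \<delta> E \<le> cover_num d y E" by (intro cover_num_anti) simp
    then have "cover_num d y E = \<infinity>" using inf by simp
    then show "\<infinity> \<le> box_ratio d E y" unfolding box_ratio_def by simp
  qed (use assms in auto)
  then have "\<infinity> \<le> lower_box_dim d E" unfolding lower_box_dim_def by (rule Liminf_bounded)
  then show False using assms by simp
qed

lemma Limsup_freq:
  fixes f :: "real \<Rightarrow> ereal"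
  assumes "ereal s < Limsup (at_right 0) f" "0 < \<epsilon>"
  shows "\<exists>\<delta>. 0 < \<delta> \<and> \<delta> < \<epsilon> \<and> f \<delta> > ereal s"
proof (rule ccontr)
  assume "\<not> ?thesis"
  note nt = this
  have h: "\<forall>\<delta>. 0 < \<delta> \<and> \<delta> < \<epsilon> \<longrightarrow> f \<delta> \<le> ereal s"
  proof (intro allI impI)
    fix \<delta> assume d: "0 < \<delta> \<and> \<delta> < \<epsilon>"
    show "f \<delta> \<le> ereal s"
    proof (rule ccontr)
      assume "\<not> f \<delta> \<le> ereal s"
      then have "f \<delta> > ereal s" by (simp add: not_le)
      then have "\<exists>\<delta>. 0 < \<delta> \<and> \<delta> < \<epsilon> \<and> f \<delta> > ereal s" using d by blast
      then show False using nt by contradiction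
    qed
  qed
  have "eventually (\<lambda>\<delta>. f \<delta> \<le> ereal s) (at_right (0::real))"
    unfolding eventually_at_right_field using assms(2) h by (intro exI[of _ \<epsilon>]) auto
  then have "Limsup (at_right 0) f \<le> ereal s" by (rule Limsup_bounded)
  then show False using assms(1) by simp
qed

lemma Liminf_ev:
  fixes f :: "real \<Rightarrow> ereal"
  assumes "ereal s < Liminf (at_right 0) f"
  shows "\<exists>\<epsilon>>0. \<forall>\<delta>. 0 < \<delta> \<and> \<delta> < \<epsilon> \<longrightarrow> f \<delta> > ereal s"
  using less_LiminfD[OF assms] unfolding eventually_at_right_field by blast

lemma Limsup_ge:
  fixes f :: "real \<Rightarrow> ereal"
  assumes "\<And>\<epsilon>. 0 < \<epsilon> \<Longrightarrow> \<exists>\<delta>. 0 < \<delta> \<and> \<delta> < \<epsilon> \<and> f \<delta> \<ge> ereal r"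
  shows "ereal r \<le> Limsup (at_right (0::real)) f"
proof (rule ccontr)
  assume "\<not> ?thesis"
  then have "Limsup (at_right 0) f < ereal r" by simp
  from Limsup_lessD[OF this] obtain b where "b > 0" "\<forall>y>0. y < b \<longrightarrow> f y < ereal r"
    unfolding eventually_at_right_field by auto
  with assms[OF \<open>b > 0\<close>] show False by force
qed

lemma Liminf_ge:
  fixes f :: "real \<Rightarrow> ereal"
  assumes "0 < \<epsilon>" "\<And>\<delta>. 0 < \<delta> \<Longrightarrow> \<delta> < \<epsilon> \<Longrightarrow> f \<delta> \<ge> ereal r"
  shows "ereal r \<le> Liminf (at_right (0::real)) f"
  by (rule Liminf_bounded) (unfold eventually_at_right_field, use assms in auto)



lemma dist_tri_all: "\<forall>x y z. dist x z \<le> dist x y + dist y (z::'a::metric_space)"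
  by (simp add: dist_triangle)

lemma dist_sym_all: "\<forall>x y. dist x y = dist y (x::'a::metric_space)"
  by (simp add: dist_commute)

lemma sep_dist:
  fixes E :: "'a::metric_space set"
  assumes "r > 0" "ereal (real m) \<le> cover_num dist (2*r) E"
  shows "\<exists>P. finite P \<and> P \<subseteq> E \<and> card P = m \<and> (\<forall>p\<in>P. \<forall>q\<in>P. p \<noteq> q \<longrightarrow> dist p q > r)"
  by (rule exists_sep[OF dist_tri_all dist_sym_all _ assms]) simp

lemma core:
  fixes A :: "'a::metric_space set" and G :: "('a \<times> 'b::metric_space) set"
  assumes d: "0 < \<delta>" "\<delta> < 1" and A: "A \<noteq> {}" "box_ratio dist A \<delta> > ereal s"
    and sec: "\<forall>x\<in>A. Pair x -` G \<noteq> {} \<and> box_ratio dist (Pair x -` G) \<delta> > ereal t"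
    and GH: "G \<subseteq> H"
  shows "ereal (\<delta> powr (-s) * \<delta> powr (-t)) \<le> cover_num max_dist (\<delta>/2) H"
proof -
  define c1 where "c1 = \<delta> powr (-s)"
  define c2 where "c2 = \<delta> powr (-t)"
  have c: "c1 > 0" "c2 > 0" using d unfolding c1_def c2_def by auto
  define m1 where "m1 = nat \<lfloor>c1\<rfloor> + 1"
  define m2 where "m2 = nat \<lfloor>c2\<rfloor> + 1"
  have m: "real m1 > c1" "real m2 > c2" unfolding m1_def m2_def using c by linarith+
  have g1: "ereal c1 < cover_num dist \<delta> A" unfolding c1_def by (rule box_ratio_gt[OF d A])
  have "ereal (real m1) \<le> cover_num dist \<delta> A"
    unfolding m1_def by (rule cover_num_ge_nat[OF g1]) (use c in linarith)
  then have m1A: "ereal (real m1) \<le> cover_num dist (2*(\<delta>/2)) A" by simp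
  have h2: "\<delta>/2 > 0" using d by simp
  from sep_dist[OF h2 m1A] obtain P1 where P1c: "finite P1 \<and> P1 \<subseteq> A \<and> card P1 = m1 \<and>
    (\<forall>p\<in>P1. \<forall>q\<in>P1. p \<noteq> q \<longrightarrow> dist p q > \<delta>/2)" by (rule exE)
  note P1 = P1c[THEN conjunct1] P1c[THEN conjunct2, THEN conjunct1] P1c[THEN conjunct2, THEN conjunct2, THEN conjunct1]
    P1c[THEN conjunct2, THEN conjunct2, THEN conjunct2]
  have "\<forall>x\<in>A. \<exists>Q. finite Q \<and> Q \<subseteq> Pair x -` G \<and> card Q = m2 \<and> (\<forall>p\<in>Q. \<forall>q\<in>Q. p \<noteq> q \<longrightarrow> dist p q > \<delta>/2)"
  proof
    fix x assume x: "x \<in> A"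
    have sx: "Pair x -` G \<noteq> {} \<and> box_ratio dist (Pair x -` G) \<delta> > ereal t" using sec x by (rule bspec)
    have g2: "ereal c2 < cover_num dist \<delta> (Pair x -` G)" unfolding c2_def
      by (rule box_ratio_gt[OF d conjunct1[OF sx] conjunct2[OF sx]])
    have "ereal (real m2) \<le> cover_num dist \<delta> (Pair x -` G)"
      unfolding m2_def by (rule cover_num_ge_nat[OF g2]) (use c in linarith)
    then have "ereal (real m2) \<le> cover_num dist (2*(\<delta>/2)) (Pair x -` G)" by simp
    then show "\<exists>Q. finite Q \<and> Q \<subseteq> Pair x -` G \<and> card Q = m2 \<and> (\<forall>p\<in>Q. \<forall>q\<in>Q. p \<noteq> q \<longrightarrow> dist p q > \<delta>/2)"
      by (rule sep_dist[OF h2])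
  qed
  from bchoice[OF this] obtain Q where Q: "\<forall>x\<in>A. finite (Q x) \<and> Q x \<subseteq> Pair x -` G \<and> card (Q x) = m2 \<and> (\<forall>p\<in>Q x. \<forall>q\<in>Q x. p \<noteq> q \<longrightarrow> dist p q > \<delta>/2)"
    by (rule exE)
  have Qx: "finite (Q x)" "Q x \<subseteq> Pair x -` G" "card (Q x) = m2"
    "\<forall>p\<in>Q x. \<forall>q\<in>Q x. p \<noteq> q \<longrightarrow> dist p q > \<delta>/2" if "x \<in> P1" for x
  proof -
    have "x \<in> A" using that P1(2) by (rule subsetD[rotated])
    then have qx: "finite (Q x) \<and> Q x \<subseteq> Pair x -` G \<and> card (Q x) = m2 \<and> (\<forall>p\<in>Q x. \<forall>q\<in>Q x. p \<noteq> q \<longrightarrow> dist p q > \<delta>/2)"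
      using Q by (rule bspec[rotated])
    show "finite (Q x)" "Q x \<subseteq> Pair x -` G" "card (Q x) = m2"
      "\<forall>p\<in>Q x. \<forall>q\<in>Q x. p \<noteq> q \<longrightarrow> dist p q > \<delta>/2"
      by (rule qx[THEN conjunct1], rule qx[THEN conjunct2, THEN conjunct1], rule qx[THEN conjunct2, THEN conjunct2, THEN conjunct1],
          rule qx[THEN conjunct2, THEN conjunct2, THEN conjunct2])
  qed
  define P where "P = Sigma P1 Q"
  have Qf: "\<forall>a\<in>P1. finite (Q a)" using Qx(1) by (rule ballI)
  have Pfin: "finite P" unfolding P_def by (rule finite_SigmaI[OF P1(1)]) (rule Qx(1))
  have PH: "P \<subseteq> H"
  proof
    fix z assume "z \<in> P"
    then obtain a b where z: "z = (a, b)" "a \<in> P1" "b \<in> Q a" unfolding P_def by (rule SigmaE)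
    have "b \<in> Pair a -` G" using z(3) Qx(2)[OF z(2)] by (rule subsetD[rotated])
    then have "z \<in> G" using z(1) by simp
    then show "z \<in> H" using GH by (rule subsetD[rotated])
  qed
  have Psep: "\<forall>p\<in>P. \<forall>q\<in>P. p \<noteq> q \<longrightarrow> max_dist p q > \<delta>/2"
  proof (intro ballI impI)
    fix p q assume pq: "p \<in> P" "q \<in> P" "p \<noteq> q"
    obtain a b where pa: "p = (a, b)" "a \<in> P1" "b \<in> Q a" using pq(1) unfolding P_def by (rule SigmaE)
    obtain a' b' where qa: "q = (a', b')" "a' \<in> P1" "b' \<in> Q a'" using pq(2) unfolding P_def by (rule SigmaE)
    show "max_dist p q > \<delta>/2"
    proof (cases "a = a'")
      case True
      then have "b \<noteq> b'" using pq(3) pa(1) qa(1) by simp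
      have "b' \<in> Q a" using qa(3) True by simp
      then have "dist b b' > \<delta>/2" using Qx(4)[OF pa(2)] pa(3) \<open>b \<noteq> b'\<close> by simp
      then show ?thesis unfolding max_dist_def pa(1) qa(1) by simp
    next
      case False
      then have "dist a a' > \<delta>/2" using P1(4) pa(2) qa(2) by simp
      then show ?thesis unfolding max_dist_def pa(1) qa(1) by simp
    qed
  qed
  have "card P = (\<Sum>a\<in>P1. card (Q a))" unfolding P_def by (rule card_SigmaI[OF P1(1) Qf])
  also have "\<dots> = (\<Sum>a\<in>P1. m2)" by (rule sum.cong[OF refl]) (rule Qx(3))
  also have "\<dots> = m1 * m2" using P1(3) by simp
  finally have cP: "card P = m1 * m2" .
  have h1: "ereal (real (card P)) \<le> cover_num max_dist (\<delta>/2) H"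
    by (rule cover_num_sep[OF Pfin PH Psep])
  have "c1 * c2 < real m1 * real m2" using m c by (intro mult_strict_mono) auto
  then have "ereal (c1 * c2) \<le> ereal (real (card P))" using cP by simp
  then show ?thesis using h1 unfolding c1_def c2_def by (rule order_trans)
qed



definition Rect :: "('a::metric_space \<times> 'b::metric_space) \<Rightarrow> real \<Rightarrow> ('a \<times> 'b) set" where
  "Rect p r = cball (fst p) r \<times> cball (snd p) r"

lemma mem_Rect: "z \<in> Rect p r \<longleftrightarrow> max_dist p z \<le> r"
  unfolding Rect_def max_dist_def by (cases z) (simp add: mem_cball)

lemma Rect_sets:
  fixes \<mu> :: "'a::metric_space measure" and \<nu> :: "'b::metric_space measure"
  assumes "sets \<mu> = sets borel" "sets \<nu> = sets borel"
  shows "Rect p r \<in> sets (\<mu> \<Otimes>\<^sub>M \<nu>)"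
  unfolding Rect_def using assms by (intro pair_measureI) (simp_all add: borel_closed)

definition Tset :: "('a::metric_space \<times> 'b::metric_space) set \<Rightarrow> ('a \<times> 'b) set" where
  "Tset D = {z. \<forall>j::nat. \<exists>p\<in>D. max_dist p z \<le> 1 / real (Suc j)}"

lemma Tset_eq: "Tset D = (\<Inter>j. \<Union>p\<in>D. Rect p (1 / real (Suc j)))"
  unfolding Tset_def by (auto simp: mem_Rect)

lemma space_pair_UNIV:
  fixes \<mu> :: "'a::metric_space measure" and \<nu> :: "'b::metric_space measure"
  assumes "sets \<mu> = sets borel" "sets \<nu> = sets borel"
  shows "space (\<mu> \<Otimes>\<^sub>M \<nu>) = UNIV"
  using sets_eq_imp_space_eq[OF assms(1)] sets_eq_imp_space_eq[OF assms(2)] by (simp add: space_pair_measure)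

lemma UNIV_pair_sets:
  fixes \<mu> :: "'a::metric_space measure" and \<nu> :: "'b::metric_space measure"
  assumes "sets \<mu> = sets borel" "sets \<nu> = sets borel"
  shows "UNIV \<in> sets (\<mu> \<Otimes>\<^sub>M \<nu>)"
  using sets.top[of "\<mu> \<Otimes>\<^sub>M \<nu>"] unfolding space_pair_UNIV[OF assms] .

lemma Tset_sets:
  fixes \<mu> :: "'a::metric_space measure" and \<nu> :: "'b::metric_space measure"
  assumes "sets \<mu> = sets borel" "sets \<nu> = sets borel" "countable D"
  shows "Tset D \<in> sets (\<mu> \<Otimes>\<^sub>M \<nu>)"
  unfolding Tset_eq
  by (intro sets.countable_INT'' sets.countable_UN'' Rect_sets assms UNIV_pair_sets) simp_all

lemma open_max_ball:
  fixes U :: "('a::metric_space \<times> 'b::metric_space) set"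
  assumes "open U" "z \<in> U"
  shows "\<exists>e>0. \<forall>w. max_dist z w < e \<longrightarrow> w \<in> U"
proof -
  obtain A B where AB: "open A" "open B" "z \<in> A \<times> B" "A \<times> B \<subseteq> U"
    using open_prod_elim[OF assms] by blast
  have "fst z \<in> A" "snd z \<in> B" using AB(3) by auto
  then obtain e1 e2 where e: "e1 > 0" "ball (fst z) e1 \<subseteq> A" "e2 > 0" "ball (snd z) e2 \<subseteq> B"
    using AB(1,2) by (meson openE)
  show ?thesis
  proof (intro exI[of _ "min e1 e2"] conjI allI impI)
    show "min e1 e2 > 0" using e by simp
    fix w assume "max_dist z w < min e1 e2"
    then have "dist (fst z) (fst w) < e1" "dist (snd z) (snd w) < e2" unfolding max_dist_def by auto
    then have "fst w \<in> A" "snd w \<in> B" using e by (auto simp: subset_iff)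
    then have "w \<in> A \<times> B" by (simp add: mem_Times_iff)
    then show "w \<in> U" using AB(4) by blast
  qed
qed

lemma max_dist_tri: "max_dist x z \<le> max_dist x y + max_dist y z"
proof -
  have "dist (fst x) (fst z) \<le> dist (fst x) (fst y) + dist (fst y) (fst z)" by (rule dist_triangle)
  moreover have "dist (snd x) (snd z) \<le> dist (snd x) (snd y) + dist (snd y) (snd z)" by (rule dist_triangle)
  ultimately show ?thesis unfolding max_dist_def by linarith
qed

lemma max_dist_sym: "max_dist x y = max_dist y x"
  unfolding max_dist_def by (simp add: dist_commute)

lemma open_inter_Tset:
  fixes \<mu> :: "'a::metric_space measure" and \<nu> :: "'b::metric_space measure"
  assumes "sets \<mu> = sets borel" "sets \<nu> = sets borel" "countable D" "open U"
  shows "U \<inter> Tset D \<in> sets (\<mu> \<Otimes>\<^sub>M \<nu>)"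
proof -
  define I where "I = {pq. fst pq \<in> D \<and> snd pq \<in> \<rat> \<and> 0 < snd pq \<and> Rect (fst pq) (snd pq) \<subseteq> U}"
  have cI: "countable I" unfolding I_def
    by (rule countable_subset[of _ "D \<times> \<rat>"]) (auto intro: countable_SIGMA assms(3) countable_rat)
  have eq: "U \<inter> Tset D = (\<Union>pq\<in>I. Rect (fst pq) (snd pq) \<inter> Tset D)"
  proof
    show "(\<Union>pq\<in>I. Rect (fst pq) (snd pq) \<inter> Tset D) \<subseteq> U \<inter> Tset D"
    proof (rule subsetI)
      fix z assume "z \<in> (\<Union>pq\<in>I. Rect (fst pq) (snd pq) \<inter> Tset D)"
      then obtain pq where pq: "pq \<in> I" "z \<in> Rect (fst pq) (snd pq) \<inter> Tset D" by (rule UN_E)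
      have "Rect (fst pq) (snd pq) \<subseteq> U" using pq(1) unfolding I_def by simp
      then show "z \<in> U \<inter> Tset D" using pq(2) by (auto simp only: subset_iff Int_iff)
    qed
    show "U \<inter> Tset D \<subseteq> (\<Union>pq\<in>I. Rect (fst pq) (snd pq) \<inter> Tset D)"
    proof
      fix z assume z: "z \<in> U \<inter> Tset D"
      have zU: "z \<in> U" using z by (rule IntD1)
      obtain e where e0: "e > 0 \<and> (\<forall>w. max_dist z w < e \<longrightarrow> w \<in> U)"
        using open_max_ball[OF assms(4) zU] by (rule exE)
      note e = conjunct1[OF e0] conjunct2[OF e0]
      obtain j where j: "1 / real (Suc j) < e/3"
      proof -
        have "e/3 > 0" using e(1) by simp
        from reals_Archimedean[OF this] obtain n where n: "inverse (real (Suc n)) < e/3" by (rule exE)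
        have "1 / real (Suc n) < e/3" using n by (simp only: inverse_eq_divide)
        then show ?thesis by (rule that)
      qed
      have zT: "z \<in> Tset D" using z by (rule IntD2)
      then have "\<forall>j::nat. \<exists>p\<in>D. max_dist p z \<le> 1 / real (Suc j)" unfolding Tset_def by (rule CollectD)
      then have "\<exists>p\<in>D. max_dist p z \<le> 1 / real (Suc j)" by (rule spec)
      then obtain p where p: "p \<in> D" "max_dist p z \<le> 1 / real (Suc j)" by (rule bexE)
      have "e/3 < 2*e/3" using e(1) by simp
      from Rats_dense_in_real[OF this] obtain q where q0: "q \<in> \<rat>" "e/3 < q \<and> q < 2*e/3" by (rule bexE)
      have q: "q \<in> \<rat>" "e/3 < q" "q < 2*e/3" using q0 by simp_all
      have zR: "z \<in> Rect p q" unfolding mem_Rect using p(2) j q(2) by linarith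
      have RU: "Rect p q \<subseteq> U"
      proof
        fix w assume "w \<in> Rect p q"
        then have "max_dist p w \<le> q" by (simp add: mem_Rect)
        moreover have "max_dist z w \<le> max_dist z p + max_dist p w" by (rule max_dist_tri)
        moreover have "max_dist z p = max_dist p z" by (rule max_dist_sym)
        ultimately have "max_dist z w < e" using p(2) j q(3) by linarith
        then show "w \<in> U" using e(2) by blast
      qed
      have "(p, q) \<in> I" unfolding I_def using p(1) q(1) q(2) e(1) RU by simp
      then show "z \<in> (\<Union>pq\<in>I. Rect (fst pq) (snd pq) \<inter> Tset D)" using zR z by force
    qed
  qed
  have "(\<Union>pq\<in>I. Rect (fst pq) (snd pq) \<inter> Tset D) \<in> sets (\<mu> \<Otimes>\<^sub>M \<nu>)"
    by (intro sets.countable_UN'' cI sets.Int Rect_sets Tset_sets assms(1-3))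
  then show ?thesis unfolding eq .
qed

lemma borel_inter_Tset:
  fixes \<mu> :: "'a::metric_space measure" and \<nu> :: "'b::metric_space measure"
  assumes "sets \<mu> = sets borel" "sets \<nu> = sets borel" "countable D" "B \<in> sets borel"
  shows "B \<inter> Tset D \<in> sets (\<mu> \<Otimes>\<^sub>M \<nu>)"
proof -
  have "B \<in> sigma_sets UNIV {S. open S}" using assms(4) unfolding sets_borel .
  then show ?thesis
  proof induct
    case (Basic a)
    then show ?case using open_inter_Tset[OF assms(1-3)] by simp
  next
    case Empty
    then show ?case by simp
  next
    case (Compl a)
    have "(UNIV - a) \<inter> Tset D = Tset D - (a \<inter> Tset D)" by blast
    then show ?case using Compl Tset_sets[OF assms(1-3)] by (simp add: sets.Diff)
  next
    case (Union a)
    have eq: "(\<Union>(range a)) \<inter> Tset D = (\<Union>i. a i \<inter> Tset D)" by blast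
    have "(\<Union>i. a i \<inter> Tset D) \<in> sets (\<mu> \<Otimes>\<^sub>M \<nu>)" using Union(2) by (intro sets.countable_UN'') simp_all
    then show ?case unfolding eq .
  qed
qed

lemma finite_net:
  assumes "cover_num d \<delta> E \<noteq> \<infinity>"
  shows "\<exists>F. finite F \<and> (\<forall>z\<in>E. \<exists>p\<in>F. d p z \<le> \<delta>)"
proof -
  have "{ereal (real (card C)) |C. finite C \<and> E \<subseteq> \<Union> C \<and> (\<forall>S\<in>C. diam_le d \<delta> S)} \<noteq> {}"
  proof
    assume h: "{ereal (real (card C)) |C. finite C \<and> E \<subseteq> \<Union> C \<and> (\<forall>S\<in>C. diam_le d \<delta> S)} = {}"
    have "cover_num d \<delta> E = Inf {}" unfolding cover_num_def h ..
    then have "cover_num d \<delta> E = \<infinity>" by (simp add: top_ereal_def)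
    then show False using assms by contradiction
  qed
  then obtain C where C: "finite C" "E \<subseteq> \<Union>C" "\<forall>S\<in>C. diam_le d \<delta> S" by blast
  define F where "F = (\<lambda>S. SOME p. p \<in> S \<inter> E) ` {S\<in>C. S \<inter> E \<noteq> {}}"
  have "finite F" unfolding F_def using C(1) by simp
  moreover have "\<forall>z\<in>E. \<exists>p\<in>F. d p z \<le> \<delta>"
  proof
    fix z assume z: "z \<in> E"
    then obtain S where S: "S \<in> C" "z \<in> S" using C(2) by blast
    then have ne: "S \<inter> E \<noteq> {}" using z by blast
    define p where "p = (SOME p. p \<in> S \<inter> E)"
    have ex: "\<exists>p. p \<in> S \<inter> E" using ne by blast
    have "p \<in> S \<inter> E" unfolding p_def by (rule someI_ex[OF ex])
    then have pS: "p \<in> S" by simp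
    have pF: "p \<in> F" unfolding F_def p_def using S(1) ne by blast
    have "diam_le d \<delta> S" using C(3) S(1) by blast
    then have "d p z \<le> \<delta>" unfolding diam_le_def using pS S(2) by blast
    then show "\<exists>p\<in>F. d p z \<le> \<delta>" using pF by blast
  qed
  ultimately show ?thesis by blast
qed

lemma countable_dense:
  fixes Es :: "nat \<Rightarrow> ('a::metric_space \<times> 'b::metric_space) set"
  assumes "\<And>n \<delta>. 0 < \<delta> \<Longrightarrow> cover_num max_dist \<delta> (Es n) \<noteq> \<infinity>"
  shows "\<exists>D. countable D \<and> (\<Union>n. Es n) \<subseteq> Tset D"
proof -
  have "\<forall>nj. \<exists>F. finite F \<and> (\<forall>z\<in>Es (fst nj). \<exists>p\<in>F. max_dist p z \<le> 1 / real (Suc (snd nj)))"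
  proof
    fix nj :: "nat \<times> nat"
    show "\<exists>F. finite F \<and> (\<forall>z\<in>Es (fst nj). \<exists>p\<in>F. max_dist p z \<le> 1 / real (Suc (snd nj)))"
      by (rule finite_net) (rule assms, simp)
  qed
  then obtain F where F: "\<forall>nj. finite (F nj) \<and> (\<forall>z\<in>Es (fst nj). \<exists>p\<in>F nj. max_dist p z \<le> 1 / real (Suc (snd nj)))"
    by (rule choice[THEN exE])
  define D where "D = (\<Union>nj. F nj)"
  have "countable D" unfolding D_def
  proof (rule countable_UN[OF countableI_type])
    fix nj :: "nat \<times> nat"
    have "finite (F nj)" using spec[OF F, of nj] by (rule conjunct1)
    then show "countable (F nj)" by (rule countable_finite)
  qed
  moreover have "(\<Union>n. Es n) \<subseteq> Tset D"
  proof
    fix z assume "z \<in> (\<Union>n. Es n)"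
    then obtain n where n: "z \<in> Es n" by blast
    show "z \<in> Tset D" unfolding Tset_def
    proof (intro CollectI allI)
      fix j :: nat
      have "\<forall>z\<in>Es (fst (n, j)). \<exists>p\<in>F (n, j). max_dist p z \<le> 1 / real (Suc (snd (n, j)))"
        using F by blast
      then obtain p where "p \<in> F (n, j)" "max_dist p z \<le> 1 / real (Suc j)" using n by auto
      then show "\<exists>p\<in>D. max_dist p z \<le> 1 / real (Suc j)" unfolding D_def by blast
    qed
  qed
  ultimately show ?thesis by blast
qed



lemma step:
  fixes A :: "'a::metric_space set" and G :: "('a \<times> 'b::metric_space) set"
  assumes d: "0 < \<delta>'" "\<delta>' < 1" "\<delta>' < 1 / real (Suc k)" "\<delta>' < 2 * exp (-((s+t)*ln 2)/((s+t)-r))"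
    and r: "0 < r" "r < s + t" and A: "A \<noteq> {}" "box_ratio dist A \<delta>' > ereal s"
    and sec: "\<forall>x\<in>A. Pair x -` G \<noteq> {} \<and> (\<forall>\<delta>. 0 < \<delta> \<and> \<delta> < 1 / real (Suc k) \<longrightarrow> box_ratio dist (Pair x -` G) \<delta> > ereal t)"
    and GH: "G \<subseteq> closure H"
  shows "box_ratio max_dist H (\<delta>'/2) \<ge> ereal r"
proof -
  have sec': "\<forall>x\<in>A. Pair x -` G \<noteq> {} \<and> box_ratio dist (Pair x -` G) \<delta>' > ereal t"
  proof
    fix x assume x: "x \<in> A"
    have sx: "Pair x -` G \<noteq> {} \<and> (\<forall>\<delta>. 0 < \<delta> \<and> \<delta> < 1 / real (Suc k) \<longrightarrow> box_ratio dist (Pair x -` G) \<delta> > ereal t)"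
      using sec x by (rule bspec)
    have all: "\<forall>\<delta>. 0 < \<delta> \<and> \<delta> < 1 / real (Suc k) \<longrightarrow> box_ratio dist (Pair x -` G) \<delta> > ereal t"
      by (rule conjunct2[OF sx])
    have "0 < \<delta>' \<and> \<delta>' < 1 / real (Suc k)" using d(1,3) by (rule conjI)
    then have "box_ratio dist (Pair x -` G) \<delta>' > ereal t" using spec[OF all, of \<delta>'] by (rule mp[rotated])
    then show "Pair x -` G \<noteq> {} \<and> box_ratio dist (Pair x -` G) \<delta>' > ereal t"
      using conjunct1[OF sx] by (intro conjI)
  qed
  have c: "ereal (\<delta>' powr (-s) * \<delta>' powr (-t)) \<le> cover_num max_dist (\<delta>'/2) (closure H)"
    by (rule core[OF d(1,2) A sec' GH])
  have c2: "cover_num max_dist (\<delta>'/2) (closure H) \<le> cover_num max_dist (\<delta>'/2) H"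
    by (rule cover_num_closure[OF cont_max_dist])
  have eq1: "\<delta>' powr (-s) * \<delta>' powr (-t) = \<delta>' powr (-s + -t)" by (rule powr_add[symmetric])
  have h1: "2*(\<delta>'/2) = \<delta>'" by simp
  have h2: "-(s+t) = -s + -t" by simp
  have eq2: "\<delta>' powr (-s + -t) = (2*(\<delta>'/2)) powr (-(s+t))" by (simp only: h1 h2)
  have c3: "ereal ((2*(\<delta>'/2)) powr (-(s+t))) \<le> cover_num max_dist (\<delta>'/2) H"
    using order_trans[OF c c2] unfolding eq1 eq2 .
  show ?thesis
  proof (rule box_ratio_ge[OF _ _ r _ c3])
    show "0 < \<delta>'/2" using d(1) by linarith
    show "\<delta>'/2 < 1/2" using d(2) by linarith
    show "\<delta>'/2 < exp (-((s+t)*ln 2)/((s+t)-r))" using d(4) by linarith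
  qed
qed

lemma main_common:
  fixes \<mu> :: "'a::metric_space measure" and \<nu> :: "'b::metric_space measure"
    and Es :: "nat \<Rightarrow> ('a \<times> 'b) set"
  assumes s\<mu>: "sets \<mu> = sets borel" and f\<mu>: "finite_measure \<mu>"
    and s\<nu>: "sets \<nu> = sets borel" and f\<nu>: "finite_measure \<nu>"
    and E: "E \<in> sets borel" "outer_measure_of (\<mu> \<Otimes>\<^sub>M \<nu>) E > 0"
    and cov: "E \<subseteq> (\<Union>n. Es n)" and fin: "\<And>n \<delta>. 0 < \<delta> \<Longrightarrow> cover_num max_dist \<delta> (Es n) \<noteq> \<infinity>"
    and t: "ereal t < measure_dim (lower_packing_dim dist) \<nu>"
  shows "\<exists>n k A G. A \<noteq> {} \<and> emeasure \<mu> (closure A) > 0 \<and> G \<subseteq> closure (Es n) \<and>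
      (\<forall>x\<in>A. Pair x -` G \<noteq> {} \<and> (\<forall>\<delta>. 0 < \<delta> \<and> \<delta> < 1 / real (Suc k) \<longrightarrow> box_ratio dist (Pair x -` G) \<delta> > ereal t))"
proof -
  have sf\<nu>: "sigma_finite_measure \<nu>" using f\<nu> by (rule finite_measure.axioms(1))
  have sp: "space \<mu> = UNIV" using sets_eq_imp_space_eq[OF s\<mu>] unfolding space_borel .
  obtain D where D0: "countable D \<and> (\<Union>n. Es n) \<subseteq> Tset D" using countable_dense[of Es, OF fin] by (rule exE)
  note D = conjunct1[OF D0] conjunct2[OF D0]
  have ET: "E \<subseteq> Tset D" using cov D(2) by (rule order_trans)
  define G where "G n = E \<inter> closure (Es n)" for n
  have Gsets: "G n \<in> sets (\<mu> \<Otimes>\<^sub>M \<nu>)" for n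
  proof -
    have "G n \<in> sets borel" unfolding G_def by (rule sets.Int[OF E(1) borel_closed[OF closed_closure]])
    then have "G n \<inter> Tset D \<in> sets (\<mu> \<Otimes>\<^sub>M \<nu>)" by (rule borel_inter_Tset[OF s\<mu> s\<nu> D(1)])
    moreover have "G n \<inter> Tset D = G n" unfolding G_def using ET by blast
    ultimately show ?thesis by simp
  qed
  have Esets: "E \<in> sets (\<mu> \<Otimes>\<^sub>M \<nu>)"
  proof -
    have "E \<inter> Tset D \<in> sets (\<mu> \<Otimes>\<^sub>M \<nu>)" by (rule borel_inter_Tset[OF s\<mu> s\<nu> D(1) E(1)])
    moreover have "E \<inter> Tset D = E" using ET by blast
    ultimately show ?thesis by simp
  qed
  have Epos: "emeasure (\<mu> \<Otimes>\<^sub>M \<nu>) E > 0" using E(2) unfolding outer_measure_of_eq[OF Esets] .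
  have EU: "E = (\<Union>n. G n)"
  proof
    show "E \<subseteq> (\<Union>n. G n)"
    proof
      fix z assume z: "z \<in> E"
      then obtain n where "z \<in> Es n" using cov by blast
      then have "z \<in> closure (Es n)" using closure_subset by blast
      then have "z \<in> G n" unfolding G_def using z by simp
      then show "z \<in> (\<Union>n. G n)" by blast
    qed
    show "(\<Union>n. G n) \<subseteq> E" unfolding G_def by blast
  qed
  have "\<exists>n. emeasure (\<mu> \<Otimes>\<^sub>M \<nu>) (G n) > 0"
  proof (rule ccontr)
    assume "\<not> ?thesis"
    then have z: "emeasure (\<mu> \<Otimes>\<^sub>M \<nu>) (G n) = 0" for n by (simp add: not_less)
    have "range G \<subseteq> sets (\<mu> \<Otimes>\<^sub>M \<nu>)" using Gsets by blast
    then have "emeasure (\<mu> \<Otimes>\<^sub>M \<nu>) (\<Union>n. G n) \<le> (\<Sum>n. emeasure (\<mu> \<Otimes>\<^sub>M \<nu>) (G n))"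
      by (rule emeasure_subadditive_countably)
    also have "\<dots> = 0" using z by simp
    finally show False using Epos unfolding EU[symmetric] by simp
  qed
  then obtain n where n: "emeasure (\<mu> \<Otimes>\<^sub>M \<nu>) (G n) > 0" by (rule exE)
  define GG where "GG = G n"
  have GGs: "GG \<in> sets (\<mu> \<Otimes>\<^sub>M \<nu>)" unfolding GG_def by (rule Gsets)
  have fub: "emeasure (\<mu> \<Otimes>\<^sub>M \<nu>) GG = (\<integral>\<^sup>+x. emeasure \<nu> (Pair x -` GG) \<partial>\<mu>)"
    by (rule sigma_finite_measure.emeasure_pair_measure_alt[OF sf\<nu> GGs])
  have fm: "(\<lambda>x. emeasure \<nu> (Pair x -` GG)) \<in> borel_measurable \<mu>"
    by (rule sigma_finite_measure.measurable_emeasure_Pair[OF sf\<nu> GGs])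
  have notAE: "\<not> (AE x in \<mu>. emeasure \<nu> (Pair x -` GG) = 0)"
  proof
    assume "AE x in \<mu>. emeasure \<nu> (Pair x -` GG) = 0"
    then have "(\<integral>\<^sup>+x. emeasure \<nu> (Pair x -` GG) \<partial>\<mu>) = 0" using nn_integral_0_iff_AE[OF fm] by simp
    then show False using n unfolding GG_def[symmetric] fub by simp
  qed
  define A0 where "A0 = {x\<in>space \<mu>. \<not> emeasure \<nu> (Pair x -` GG) = 0}"
  have A0s: "A0 \<in> sets \<mu>"
  proof -
    have "A0 = (\<lambda>x. emeasure \<nu> (Pair x -` GG)) -` (UNIV - {0}) \<inter> space \<mu>" unfolding A0_def by blast
    also have "\<dots> \<in> sets \<mu>" using fm by (rule measurable_sets) simp
    finally show ?thesis .
  qed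
  have A0pos: "emeasure \<mu> A0 \<noteq> 0"
  proof
    assume "emeasure \<mu> A0 = 0"
    then have "AE x in \<mu>. emeasure \<nu> (Pair x -` GG) = 0"
      using AE_iff_measurable[OF A0s A0_def[symmetric]] by simp
    then show False using notAE by contradiction
  qed
  have lb: "\<exists>\<epsilon>>0. \<forall>\<delta>. 0 < \<delta> \<and> \<delta> < \<epsilon> \<longrightarrow> box_ratio dist (Pair x -` GG) \<delta> > ereal t" if x: "x \<in> A0" for x
  proof -
    have secs: "Pair x -` GG \<in> sets \<nu>" by (rule sets_Pair1[OF GGs])
    then have secb: "Pair x -` GG \<in> sets borel" using s\<nu> by simp
    have "emeasure \<nu> (Pair x -` GG) \<noteq> 0" using x unfolding A0_def by simp
    then have pos: "outer_measure_of \<nu> (Pair x -` GG) > 0" unfolding outer_measure_of_eq[OF secs]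
      by (simp add: zero_less_iff_neq_zero)
    have "measure_dim (lower_packing_dim dist) \<nu> \<le> lower_packing_dim dist (Pair x -` GG)"
      unfolding measure_dim_def by (rule Inf_lower) (use secb pos in blast)
    also have "\<dots> \<le> lower_box_dim dist (Pair x -` GG)" by (rule lpd_le_lbox)
    finally have "ereal t < lower_box_dim dist (Pair x -` GG)" using t by (rule order.strict_trans2[rotated])
    then show ?thesis unfolding lower_box_dim_def by (rule Liminf_ev)
  qed
  define A where "A k = {x\<in>A0. \<forall>\<delta>. 0 < \<delta> \<and> \<delta> < 1 / real (Suc k) \<longrightarrow> box_ratio dist (Pair x -` GG) \<delta> > ereal t}" for k
  have incA: "incseq A"
  proof (rule incseq_SucI)
    fix k
    show "A k \<subseteq> A (Suc k)"
    proof
      fix x assume x: "x \<in> A k"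
      have "1 / real (Suc (Suc k)) \<le> 1 / real (Suc k)" by (simp add: frac_le)
      then show "x \<in> A (Suc k)" using x unfolding A_def by (auto intro: less_le_trans)
    qed
  qed
  have UA: "(\<Union>k. A k) = A0"
  proof
    show "(\<Union>k. A k) \<subseteq> A0" unfolding A_def by blast
    show "A0 \<subseteq> (\<Union>k. A k)"
    proof
      fix x assume x: "x \<in> A0"
      obtain \<epsilon> where e: "\<epsilon> > 0" "\<forall>\<delta>. 0 < \<delta> \<and> \<delta> < \<epsilon> \<longrightarrow> box_ratio dist (Pair x -` GG) \<delta> > ereal t"
        using lb[OF x] by blast
      from reals_Archimedean[OF e(1)] obtain k where k: "inverse (real (Suc k)) < \<epsilon>" by (rule exE)
      have "1 / real (Suc k) < \<epsilon>" using k by (simp only: inverse_eq_divide)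
      then have "x \<in> A k" unfolding A_def using x e(2) by auto
      then show "x \<in> (\<Union>k. A k)" by blast
    qed
  qed
  have "(SUP k. outer_measure_of \<mu> (A k)) = outer_measure_of \<mu> (\<Union>k. A k)"
    by (rule SUP_outer_measure_of_incseq) (simp_all add: sp incA)
  also have "\<dots> = emeasure \<mu> A0" unfolding UA by (rule outer_measure_of_eq[OF A0s])
  finally have "0 < (SUP k. outer_measure_of \<mu> (A k))" using A0pos by (simp add: zero_less_iff_neq_zero)
  then obtain k where k: "0 < outer_measure_of \<mu> (A k)" by (auto simp: less_SUP_iff)
  have Ane: "A k \<noteq> {}"
  proof
    assume "A k = {}"
    then have "outer_measure_of \<mu> (A k) = 0" by simp
    then show False using k by simp
  qed
  have cls: "closure (A k) \<in> sets \<mu>" using s\<mu> by (simp add: borel_closed)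
  have "outer_measure_of \<mu> (A k) \<le> outer_measure_of \<mu> (closure (A k))"
    by (rule outer_measure_of_mono[OF closure_subset])
  then have cpos: "emeasure \<mu> (closure (A k)) > 0" using k unfolding outer_measure_of_eq[OF cls] by simp
  have GGc: "GG \<subseteq> closure (Es n)" unfolding GG_def G_def by blast
  have secA: "\<forall>x\<in>A k. Pair x -` GG \<noteq> {} \<and> (\<forall>\<delta>. 0 < \<delta> \<and> \<delta> < 1 / real (Suc k) \<longrightarrow> box_ratio dist (Pair x -` GG) \<delta> > ereal t)"
  proof
    fix x assume x: "x \<in> A k"
    then have xA0: "x \<in> A0" and all: "\<forall>\<delta>. 0 < \<delta> \<and> \<delta> < 1 / real (Suc k) \<longrightarrow> box_ratio dist (Pair x -` GG) \<delta> > ereal t"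
      unfolding A_def by simp_all
    have "emeasure \<nu> (Pair x -` GG) \<noteq> 0" using xA0 unfolding A0_def by simp
    then have "Pair x -` GG \<noteq> {}" by auto
    then show "Pair x -` GG \<noteq> {} \<and> (\<forall>\<delta>. 0 < \<delta> \<and> \<delta> < 1 / real (Suc k) \<longrightarrow> box_ratio dist (Pair x -` GG) \<delta> > ereal t)"
      using all by (rule conjI)
  qed
  show ?thesis
    by (rule exI[of _ n], rule exI[of _ k], rule exI[of _ "A k"], rule exI[of _ GG]) (intro conjI Ane cpos GGc secA)
qed



lemma ereal_split:
  assumes "ereal r < a + b" "0 \<le> a" "0 \<le> b"
  shows "\<exists>s t. ereal s < a \<and> ereal t < b \<and> r < s + t"
proof (cases a)
  case (real x)
  note ax = this
  show ?thesis
  proof (cases b)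
    case (real y)
    define e where "e = (x + y - r) / 3"
    have rxy: "r < x + y" using assms(1) ax real by simp
    then have e: "e > 0" unfolding e_def by simp
    show ?thesis
    proof (intro exI conjI)
      show "ereal (x - e) < a" using ax e by simp
      show "ereal (y - e) < b" using real e by simp
      show "r < (x - e) + (y - e)" using rxy unfolding e_def by (simp add: field_simps)
    qed
  next
    case PInf
    show ?thesis
    proof (intro exI conjI)
      show "ereal (x - 1) < a" using ax by simp
      show "ereal (r - x + 2) < b" using PInf by simp
      show "r < (x - 1) + (r - x + 2)" by simp
    qed
  next
    case MInf then show ?thesis using assms(3) by simp
  qed
next
  case PInf
  show ?thesis
  proof (intro exI conjI)
    show "ereal (r + 2) < a" using PInf by simp
    show "ereal (-1) < b" using assms(3) by (rule order.strict_trans2[rotated]) simp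
    show "r < (r + 2) + (-1)" by simp
  qed
next
  case MInf then show ?thesis using assms(2) by simp
qed

lemma dense_le:
  fixes x y :: ereal
  assumes "\<And>r. 0 < r \<Longrightarrow> ereal r < x \<Longrightarrow> ereal r \<le> y" "0 \<le> y"
  shows "x \<le> y"
proof (rule ccontr)
  assume "\<not> x \<le> y"
  then have "y < x" by simp
  from ereal_dense2[OF this] obtain z where z: "y < ereal z" "ereal z < x" by (elim exE conjE)
  have "0 < ereal z" by (rule le_less_trans[OF assms(2) z(1)])
  then have "0 < z" by simp
  then have "ereal z \<le> y" using assms(1) z(2) by blast
  then show False using z(1) by simp
qed

lemma part_i_E:
  fixes \<mu> :: "'a::metric_space measure" and \<nu> :: "'b::metric_space measure"
    and Es :: "nat \<Rightarrow> ('a \<times> 'b) set"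
  assumes s\<mu>: "sets \<mu> = sets borel" and f\<mu>: "finite_measure \<mu>"
    and s\<nu>: "sets \<nu> = sets borel" and f\<nu>: "finite_measure \<nu>"
    and E: "E \<in> sets borel" "outer_measure_of (\<mu> \<Otimes>\<^sub>M \<nu>) E > 0"
    and cov: "E \<subseteq> (\<Union>n. Es n)"
    and s: "ereal s < measure_dim (packing_dim dist) \<mu>"
    and t: "ereal t < measure_dim (lower_packing_dim dist) \<nu>"
    and r: "0 < r" "r < s + t"
  shows "\<exists>n. ereal r \<le> upper_box_dim max_dist (Es n)"
proof (rule ccontr)
  assume "\<not> ?thesis"
  then have lt: "upper_box_dim max_dist (Es n) < ereal r" for n by (simp add: not_le)
  have fin: "cover_num max_dist \<delta> (Es n) \<noteq> \<infinity>" if "0 < \<delta>" for n \<delta>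
  proof (rule lbox_finite_cover[OF _ that])
    have "lower_box_dim max_dist (Es n) \<le> upper_box_dim max_dist (Es n)" by (rule lbox_le_ubox)
    also have "\<dots> < ereal r" by (rule lt)
    finally have "lower_box_dim max_dist (Es n) < ereal r" .
    moreover have "ereal r < \<infinity>" by simp
    ultimately show "lower_box_dim max_dist (Es n) < \<infinity>" by (rule less_trans)
  qed
  from main_common[OF s\<mu> f\<mu> s\<nu> f\<nu> E cov fin t]
  obtain n where "\<exists>k A G. A \<noteq> {} \<and> emeasure \<mu> (closure A) > 0 \<and> G \<subseteq> closure (Es n) \<and>
      (\<forall>x\<in>A. Pair x -` G \<noteq> {} \<and> (\<forall>\<delta>. 0 < \<delta> \<and> \<delta> < 1 / real (Suc k) \<longrightarrow> box_ratio dist (Pair x -` G) \<delta> > ereal t))"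
    by (rule exE)
  then obtain k where "\<exists>A G. A \<noteq> {} \<and> emeasure \<mu> (closure A) > 0 \<and> G \<subseteq> closure (Es n) \<and>
      (\<forall>x\<in>A. Pair x -` G \<noteq> {} \<and> (\<forall>\<delta>. 0 < \<delta> \<and> \<delta> < 1 / real (Suc k) \<longrightarrow> box_ratio dist (Pair x -` G) \<delta> > ereal t))"
    by (rule exE)
  then obtain A where "\<exists>G. A \<noteq> {} \<and> emeasure \<mu> (closure A) > 0 \<and> G \<subseteq> closure (Es n) \<and>
      (\<forall>x\<in>A. Pair x -` G \<noteq> {} \<and> (\<forall>\<delta>. 0 < \<delta> \<and> \<delta> < 1 / real (Suc k) \<longrightarrow> box_ratio dist (Pair x -` G) \<delta> > ereal t))"
    by (rule exE)
  then obtain G where H: "A \<noteq> {} \<and> emeasure \<mu> (closure A) > 0 \<and> G \<subseteq> closure (Es n) \<and>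
      (\<forall>x\<in>A. Pair x -` G \<noteq> {} \<and> (\<forall>\<delta>. 0 < \<delta> \<and> \<delta> < 1 / real (Suc k) \<longrightarrow> box_ratio dist (Pair x -` G) \<delta> > ereal t))"
    by (rule exE)
  note H1 = conjunct1[OF H] conjunct1[OF conjunct2[OF H]] conjunct1[OF conjunct2[OF conjunct2[OF H]]]
    conjunct2[OF conjunct2[OF conjunct2[OF H]]]
  have cls: "closure A \<in> sets \<mu>" unfolding s\<mu> by (rule borel_closed[OF closed_closure])
  have clb: "closure A \<in> sets borel" by (rule borel_closed[OF closed_closure])
  have "outer_measure_of \<mu> (closure A) > 0" unfolding outer_measure_of_eq[OF cls] by (rule H1(2))
  then have "measure_dim (packing_dim dist) \<mu> \<le> packing_dim dist (closure A)"
    unfolding measure_dim_def using clb by (intro Inf_lower) blast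
  also have "\<dots> \<le> upper_box_dim dist (closure A)" by (rule pd_le_ubox)
  also have "\<dots> \<le> upper_box_dim dist A" by (rule ubox_mono[OF cover_num_closure[OF cont_dist]])
  finally have sA: "ereal s < Limsup (at_right 0) (box_ratio dist A)"
    using s unfolding upper_box_dim_def by (rule order.strict_trans2[rotated])
  define w where "w = s + t"
  define \<delta>1 where "\<delta>1 = exp (-((s+t)*ln 2)/((s+t)-r))"
  have d1: "\<delta>1 > 0" unfolding \<delta>1_def by simp
  have "ereal r \<le> upper_box_dim max_dist (Es n)" unfolding upper_box_dim_def
  proof (rule Limsup_ge)
    fix \<epsilon> :: real assume e: "0 < \<epsilon>"
    define \<epsilon>' where "\<epsilon>' = min (2*\<epsilon>) (min (1 / real (Suc k)) (min 1 (2*\<delta>1)))"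
    have e': "0 < \<epsilon>'" unfolding \<epsilon>'_def using e d1 by simp
    from Limsup_freq[OF sA e'] obtain \<delta>' where dd: "0 < \<delta>'" "\<delta>' < \<epsilon>'" "box_ratio dist A \<delta>' > ereal s"
      by (elim exE conjE)
    have dd2: "\<delta>' < 2*\<epsilon>" "\<delta>' < 1 / real (Suc k)" "\<delta>' < 1" "\<delta>' < 2*\<delta>1"
      using dd(2) unfolding \<epsilon>'_def by simp_all
    have "box_ratio max_dist (Es n) (\<delta>'/2) \<ge> ereal r"
      by (rule step[OF dd(1) dd2(3) dd2(2) dd2(4)[unfolded \<delta>1_def] r H1(1) dd(3) H1(4) H1(3)])
    moreover have "0 < \<delta>'/2" "\<delta>'/2 < \<epsilon>" using dd(1) dd2(1) by simp_all
    ultimately show "\<exists>\<delta>. 0 < \<delta> \<and> \<delta> < \<epsilon> \<and> box_ratio max_dist (Es n) \<delta> \<ge> ereal r" by blast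
  qed
  then show False using lt[of n] by simp
qed

lemma part_ii_E:
  fixes \<mu> :: "'a::metric_space measure" and \<nu> :: "'b::metric_space measure"
    and Es :: "nat \<Rightarrow> ('a \<times> 'b) set"
  assumes s\<mu>: "sets \<mu> = sets borel" and f\<mu>: "finite_measure \<mu>"
    and s\<nu>: "sets \<nu> = sets borel" and f\<nu>: "finite_measure \<nu>"
    and E: "E \<in> sets borel" "outer_measure_of (\<mu> \<Otimes>\<^sub>M \<nu>) E > 0"
    and cov: "E \<subseteq> (\<Union>n. Es n)"
    and s: "ereal s < measure_dim (lower_packing_dim dist) \<mu>"
    and t: "ereal t < measure_dim (lower_packing_dim dist) \<nu>"
    and r: "0 < r" "r < s + t"
  shows "\<exists>n. ereal r \<le> lower_box_dim max_dist (Es n)"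
proof (rule ccontr)
  assume "\<not> ?thesis"
  then have lt: "lower_box_dim max_dist (Es n) < ereal r" for n by (simp add: not_le)
  have fin: "cover_num max_dist \<delta> (Es n) \<noteq> \<infinity>" if "0 < \<delta>" for n \<delta>
  proof (rule lbox_finite_cover[OF _ that])
    have "lower_box_dim max_dist (Es n) < ereal r" by (rule lt)
    moreover have "ereal r < \<infinity>" by simp
    ultimately show "lower_box_dim max_dist (Es n) < \<infinity>" by (rule less_trans)
  qed
  from main_common[OF s\<mu> f\<mu> s\<nu> f\<nu> E cov fin t]
  obtain n where "\<exists>k A G. A \<noteq> {} \<and> emeasure \<mu> (closure A) > 0 \<and> G \<subseteq> closure (Es n) \<and>
      (\<forall>x\<in>A. Pair x -` G \<noteq> {} \<and> (\<forall>\<delta>. 0 < \<delta> \<and> \<delta> < 1 / real (Suc k) \<longrightarrow> box_ratio dist (Pair x -` G) \<delta> > ereal t))"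
    by (rule exE)
  then obtain k where "\<exists>A G. A \<noteq> {} \<and> emeasure \<mu> (closure A) > 0 \<and> G \<subseteq> closure (Es n) \<and>
      (\<forall>x\<in>A. Pair x -` G \<noteq> {} \<and> (\<forall>\<delta>. 0 < \<delta> \<and> \<delta> < 1 / real (Suc k) \<longrightarrow> box_ratio dist (Pair x -` G) \<delta> > ereal t))"
    by (rule exE)
  then obtain A where "\<exists>G. A \<noteq> {} \<and> emeasure \<mu> (closure A) > 0 \<and> G \<subseteq> closure (Es n) \<and>
      (\<forall>x\<in>A. Pair x -` G \<noteq> {} \<and> (\<forall>\<delta>. 0 < \<delta> \<and> \<delta> < 1 / real (Suc k) \<longrightarrow> box_ratio dist (Pair x -` G) \<delta> > ereal t))"
    by (rule exE)
  then obtain G where H: "A \<noteq> {} \<and> emeasure \<mu> (closure A) > 0 \<and> G \<subseteq> closure (Es n) \<and>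
      (\<forall>x\<in>A. Pair x -` G \<noteq> {} \<and> (\<forall>\<delta>. 0 < \<delta> \<and> \<delta> < 1 / real (Suc k) \<longrightarrow> box_ratio dist (Pair x -` G) \<delta> > ereal t))"
    by (rule exE)
  note H1 = conjunct1[OF H] conjunct1[OF conjunct2[OF H]] conjunct1[OF conjunct2[OF conjunct2[OF H]]]
    conjunct2[OF conjunct2[OF conjunct2[OF H]]]
  have cls: "closure A \<in> sets \<mu>" unfolding s\<mu> by (rule borel_closed[OF closed_closure])
  have clb: "closure A \<in> sets borel" by (rule borel_closed[OF closed_closure])
  have "outer_measure_of \<mu> (closure A) > 0" unfolding outer_measure_of_eq[OF cls] by (rule H1(2))
  then have "measure_dim (lower_packing_dim dist) \<mu> \<le> lower_packing_dim dist (closure A)"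
    unfolding measure_dim_def using clb by (intro Inf_lower) blast
  also have "\<dots> \<le> lower_box_dim dist (closure A)" by (rule lpd_le_lbox)
  also have "\<dots> \<le> lower_box_dim dist A" by (rule lbox_mono[OF cover_num_closure[OF cont_dist]])
  finally have sA: "ereal s < Liminf (at_right 0) (box_ratio dist A)"
    using s unfolding lower_box_dim_def by (rule order.strict_trans2[rotated])
  from Liminf_ev[OF sA] obtain \<epsilon>0 where e0: "\<epsilon>0 > 0" "\<forall>\<delta>. 0 < \<delta> \<and> \<delta> < \<epsilon>0 \<longrightarrow> box_ratio dist A \<delta> > ereal s"
    by (elim exE conjE)
  define \<delta>1 where "\<delta>1 = exp (-((s+t)*ln 2)/((s+t)-r))"
  have d1: "\<delta>1 > 0" unfolding \<delta>1_def by simp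
  define \<epsilon> where "\<epsilon> = min (\<epsilon>0/2) (min (1 / (2 * real (Suc k))) (min (1/2) \<delta>1))"
  have e: "0 < \<epsilon>" unfolding \<epsilon>_def using e0(1) d1 by simp
  have "ereal r \<le> lower_box_dim max_dist (Es n)" unfolding lower_box_dim_def
  proof (rule Liminf_ge[OF e])
    fix \<delta> :: real assume d: "0 < \<delta>" "\<delta> < \<epsilon>"
    define \<delta>' where "\<delta>' = 2 * \<delta>"
    have dd: "0 < \<delta>'" "\<delta>' < \<epsilon>0" "\<delta>' < 1 / real (Suc k)" "\<delta>' < 1" "\<delta>' < 2*\<delta>1"
      using d unfolding \<delta>'_def \<epsilon>_def by (simp_all add: field_simps)
    have "0 < \<delta>' \<and> \<delta>' < \<epsilon>0" using dd(1,2) by (rule conjI)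
    then have bA: "box_ratio dist A \<delta>' > ereal s" using spec[OF e0(2), of \<delta>'] by (rule mp[rotated])
    have "box_ratio max_dist (Es n) (\<delta>'/2) \<ge> ereal r"
      by (rule step[OF dd(1) dd(4) dd(3) dd(5)[unfolded \<delta>1_def] r H1(1) bA H1(4) H1(3)])
    then show "box_ratio max_dist (Es n) \<delta> \<ge> ereal r" unfolding \<delta>'_def by simp
  qed
  then show False using lt[of n] by simp
qed



lemma thm_i:
  fixes \<mu> :: "'a::metric_space measure" and \<nu> :: "'b::metric_space measure"
  assumes s\<mu>: "sets \<mu> = sets borel" and f\<mu>: "finite_measure \<mu>"
    and s\<nu>: "sets \<nu> = sets borel" and f\<nu>: "finite_measure \<nu>"
  shows "measure_dim (packing_dim max_dist) (\<mu> \<Otimes>\<^sub>M \<nu>)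
           \<ge> measure_dim (packing_dim dist) \<mu> + measure_dim (lower_packing_dim dist) \<nu>"
proof -
  have a0: "0 \<le> measure_dim (packing_dim dist) \<mu>" by (rule measure_dim_nonneg) (rule pd_nonneg)
  have b0: "0 \<le> measure_dim (lower_packing_dim dist) \<nu>" by (rule measure_dim_nonneg) (rule lpd_nonneg)
  show ?thesis unfolding measure_dim_def[of "packing_dim max_dist"]
  proof (rule Inf_greatest)
    fix x assume "x \<in> {packing_dim max_dist E |E. E \<in> sets borel \<and> 0 < outer_measure_of (\<mu> \<Otimes>\<^sub>M \<nu>) E}"
    then obtain E where x: "x = packing_dim max_dist E" and E: "E \<in> sets borel" "0 < outer_measure_of (\<mu> \<Otimes>\<^sub>M \<nu>) E"
      by blast
    have "measure_dim (packing_dim dist) \<mu> + measure_dim (lower_packing_dim dist) \<nu> \<le> packing_dim max_dist E"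
      unfolding packing_dim_def[of max_dist]
    proof (rule Inf_greatest)
      fix y assume "y \<in> {SUP n. upper_box_dim max_dist (Es n) |Es :: nat \<Rightarrow> ('a \<times> 'b) set. E \<subseteq> (\<Union>n. Es n)}"
      then have "\<exists>Es :: nat \<Rightarrow> ('a \<times> 'b) set. y = (SUP n. upper_box_dim max_dist (Es n)) \<and> E \<subseteq> (\<Union>n. Es n)"
        by (rule CollectD)
      then obtain Es :: "nat \<Rightarrow> ('a \<times> 'b) set" where yc: "y = (SUP n. upper_box_dim max_dist (Es n)) \<and> E \<subseteq> (\<Union>n. Es n)"
        by (rule exE)
      note y = conjunct1[OF yc] and cov = conjunct2[OF yc]
      show "measure_dim (packing_dim dist) \<mu> + measure_dim (lower_packing_dim dist) \<nu> \<le> y" unfolding y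
      proof (rule dense_le)
        show "0 \<le> (SUP n. upper_box_dim max_dist (Es n))"
        proof -
          have "0 \<le> upper_box_dim max_dist (Es 0)" by (rule ubox_nonneg)
          also have "\<dots> \<le> (SUP n. upper_box_dim max_dist (Es n))" by (rule SUP_upper) simp
          finally show ?thesis .
        qed
        fix r assume r: "0 < r" "ereal r < measure_dim (packing_dim dist) \<mu> + measure_dim (lower_packing_dim dist) \<nu>"
        obtain s t where st: "ereal s < measure_dim (packing_dim dist) \<mu>" "ereal t < measure_dim (lower_packing_dim dist) \<nu>" "r < s + t"
          using ereal_split[OF r(2) a0 b0] by blast
        obtain n where "ereal r \<le> upper_box_dim max_dist (Es n)"
          using part_i_E[OF s\<mu> f\<mu> s\<nu> f\<nu> E cov st(1,2) r(1) st(3)] by (rule exE)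
        then show "ereal r \<le> (SUP n. upper_box_dim max_dist (Es n))"
          by (rule order_trans) (rule SUP_upper, simp)
      qed
    qed
    then show "measure_dim (packing_dim dist) \<mu> + measure_dim (lower_packing_dim dist) \<nu> \<le> x" unfolding x .
  qed
qed

lemma thm_ii:
  fixes \<mu> :: "'a::metric_space measure" and \<nu> :: "'b::metric_space measure"
  assumes s\<mu>: "sets \<mu> = sets borel" and f\<mu>: "finite_measure \<mu>"
    and s\<nu>: "sets \<nu> = sets borel" and f\<nu>: "finite_measure \<nu>"
  shows "measure_dim (lower_packing_dim max_dist) (\<mu> \<Otimes>\<^sub>M \<nu>)
           \<ge> measure_dim (lower_packing_dim dist) \<mu> + measure_dim (lower_packing_dim dist) \<nu>"
proof -
  have a0: "0 \<le> measure_dim (lower_packing_dim dist) \<mu>" by (rule measure_dim_nonneg) (rule lpd_nonneg)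
  have b0: "0 \<le> measure_dim (lower_packing_dim dist) \<nu>" by (rule measure_dim_nonneg) (rule lpd_nonneg)
  show ?thesis unfolding measure_dim_def[of "lower_packing_dim max_dist"]
  proof (rule Inf_greatest)
    fix x assume "x \<in> {lower_packing_dim max_dist E |E. E \<in> sets borel \<and> 0 < outer_measure_of (\<mu> \<Otimes>\<^sub>M \<nu>) E}"
    then obtain E where x: "x = lower_packing_dim max_dist E" and E: "E \<in> sets borel" "0 < outer_measure_of (\<mu> \<Otimes>\<^sub>M \<nu>) E"
      by blast
    have "measure_dim (lower_packing_dim dist) \<mu> + measure_dim (lower_packing_dim dist) \<nu> \<le> lower_packing_dim max_dist E"
      unfolding lower_packing_dim_def[of max_dist]
    proof (rule Inf_greatest)
      fix y assume "y \<in> {SUP n. lower_box_dim max_dist (Es n) |Es :: nat \<Rightarrow> ('a \<times> 'b) set. E \<subseteq> (\<Union>n. Es n)}"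
      then have "\<exists>Es :: nat \<Rightarrow> ('a \<times> 'b) set. y = (SUP n. lower_box_dim max_dist (Es n)) \<and> E \<subseteq> (\<Union>n. Es n)"
        by (rule CollectD)
      then obtain Es :: "nat \<Rightarrow> ('a \<times> 'b) set" where yc: "y = (SUP n. lower_box_dim max_dist (Es n)) \<and> E \<subseteq> (\<Union>n. Es n)"
        by (rule exE)
      note y = conjunct1[OF yc] and cov = conjunct2[OF yc]
      show "measure_dim (lower_packing_dim dist) \<mu> + measure_dim (lower_packing_dim dist) \<nu> \<le> y" unfolding y
      proof (rule dense_le)
        show "0 \<le> (SUP n. lower_box_dim max_dist (Es n))"
        proof -
          have "0 \<le> lower_box_dim max_dist (Es 0)" by (rule lbox_nonneg)
          also have "\<dots> \<le> (SUP n. lower_box_dim max_dist (Es n))" by (rule SUP_upper) simp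
          finally show ?thesis .
        qed
        fix r assume r: "0 < r" "ereal r < measure_dim (lower_packing_dim dist) \<mu> + measure_dim (lower_packing_dim dist) \<nu>"
        obtain s t where st: "ereal s < measure_dim (lower_packing_dim dist) \<mu>" "ereal t < measure_dim (lower_packing_dim dist) \<nu>" "r < s + t"
          using ereal_split[OF r(2) a0 b0] by blast
        obtain n where "ereal r \<le> lower_box_dim max_dist (Es n)"
          using part_ii_E[OF s\<mu> f\<mu> s\<nu> f\<nu> E cov st(1,2) r(1) st(3)] by (rule exE)
        then show "ereal r \<le> (SUP n. lower_box_dim max_dist (Es n))"
          by (rule order_trans) (rule SUP_upper, simp)
      qed
    qed
    then show "measure_dim (lower_packing_dim dist) \<mu> + measure_dim (lower_packing_dim dist) \<nu> \<le> x" unfolding x .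
  qed
qed

theorem theorem6p8:
  fixes \<mu> :: "'a::metric_space measure" and \<nu> :: "'b::metric_space measure"
  assumes "sets \<mu> = sets borel" and "finite_measure \<mu>"
    and "sets \<nu> = sets borel" and "finite_measure \<nu>"
  shows "measure_dim (packing_dim max_dist) (\<mu> \<Otimes>\<^sub>M \<nu>)
           \<ge> measure_dim (packing_dim dist) \<mu> + measure_dim (lower_packing_dim dist) \<nu>
         \<and> measure_dim (lower_packing_dim max_dist) (\<mu> \<Otimes>\<^sub>M \<nu>)
           \<ge> measure_dim (lower_packing_dim dist) \<mu> + measure_dim (lower_packing_dim dist) \<nu>"
  using thm_i[OF assms] thm_ii[OF assms] by (rule conjI)


end
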